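(* Let $\alpha\in\ell^2$. For every $p>0$ there exists a constant $C_p$ depending only on $p$ such that $$\|(\sigma_k)_{k\in\mathbb{N}}\|_{\ell^p}\le C_p\,\|(a_k(R_\alpha))_{k\ge1}\|_{\ell^p},$$ where the $\ell^p$-(quasi)norms may be infinite.
   Context: $\mathbb{N}=\{0,1,2,\dots\}$; $(R_\alpha f)(k)=\alpha_k\sum_{j=0}^kf(j)$ on $\ell^2$ (square-summable functions $\mathbb{N}\to\mathbb{C}$). $\sigma_k=(\sum_{j=2^k}^{2^{k+1}-1}(j+1)|\alpha_j|^2)^{1/2}$. Approximation numbers: $a_{n+1}(T)=\inf\{\|T-P\|:P$ linear with rank $\le n\}$, $n\ge0$. *)

theory Defs
  imports "HOL-Analysis.Analysis"
begin

text \<open>Real powers on extended nonnegative reals (used only with exponent r > 0).\<close>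
definition ennpowr :: "ennreal \<Rightarrow> real \<Rightarrow> ennreal" where
  "ennpowr x r = (if x = \<infinity> then \<infinity> else ennreal (enn2real x powr r))"

definition lp_norm :: "real \<Rightarrow> (nat \<Rightarrow> ennreal) \<Rightarrow> ennreal" where
  "lp_norm p x = ennpowr (\<Sum>k. ennpowr (x k) p) (1 / p)"

definition in_l2 :: "(nat \<Rightarrow> complex) \<Rightarrow> bool" where
  "in_l2 f \<longleftrightarrow> summable (\<lambda>k. (cmod (f k))\<^sup>2)"

definition l2norm :: "(nat \<Rightarrow> complex) \<Rightarrow> ennreal" where
  "l2norm f = lp_norm 2 (\<lambda>k. ennreal (cmod (f k)))"

definition opnorm :: "((nat \<Rightarrow> complex) \<Rightarrow> (nat \<Rightarrow> complex)) \<Rightarrow> ennreal" where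
  "opnorm T = (SUP f \<in> {f. in_l2 f \<and> l2norm f \<le> 1}. l2norm (T f))"

definition l2_linear :: "((nat \<Rightarrow> complex) \<Rightarrow> (nat \<Rightarrow> complex)) \<Rightarrow> bool" where
  "l2_linear P \<longleftrightarrow>
     (\<forall>f. in_l2 f \<longrightarrow> in_l2 (P f)) \<and>
     (\<forall>f g. in_l2 f \<longrightarrow> in_l2 g \<longrightarrow> P (\<lambda>k. f k + g k) = (\<lambda>k. P f k + P g k)) \<and>
     (\<forall>c f. in_l2 f \<longrightarrow> P (\<lambda>k. c * f k) = (\<lambda>k. c * P f k))"

definition rank_le :: "((nat \<Rightarrow> complex) \<Rightarrow> (nat \<Rightarrow> complex)) \<Rightarrow> nat \<Rightarrow> bool" where
  "rank_le P n \<longleftrightarrow> (\<exists>v :: nat \<Rightarrow> nat \<Rightarrow> complex. \<forall>f. in_l2 f \<longrightarrow>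
      (\<exists>c :: nat \<Rightarrow> complex. P f = (\<lambda>k. \<Sum>i<n. c i * v i k)))"

text \<open>Approximation numbers: a_{n+1}(T) = inf { ||T - P|| : P linear, rank P <= n }.
  Only meaningful for m >= 1.\<close>
definition approx_number :: "((nat \<Rightarrow> complex) \<Rightarrow> (nat \<Rightarrow> complex)) \<Rightarrow> nat \<Rightarrow> ennreal" where
  "approx_number T m =
     (INF P \<in> {P. l2_linear P \<and> rank_le P (m - 1)}. opnorm (\<lambda>f k. T f k - P f k))"

definition R_op :: "(nat \<Rightarrow> complex) \<Rightarrow> (nat \<Rightarrow> complex) \<Rightarrow> (nat \<Rightarrow> complex)" where
  "R_op \<alpha> f = (\<lambda>k. \<alpha> k * (\<Sum>j\<le>k. f j))"

definition sigma :: "(nat \<Rightarrow> complex) \<Rightarrow> nat \<Rightarrow> real" where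
  "sigma \<alpha> k = sqrt (\<Sum>j\<in>{2^k..<2^(k+1)}. real (j + 1) * (cmod (\<alpha> j))\<^sup>2)"

end

theory Submission
  imports Defs
begin



lemma ennpowr_mono:
  assumes "x \<le> y" "0 < r" shows "ennpowr x r \<le> ennpowr y r"
proof (cases "y = \<infinity>")
  case True then show ?thesis by (simp add: ennpowr_def)
next
  case False
  then have yt: "y < top" by (simp add: top.not_eq_extremum)
  then have "x \<noteq> \<infinity>" using assms(1) by auto
  moreover have "enn2real x \<le> enn2real y" using enn2real_mono[OF assms(1) yt] .
  ultimately show ?thesis using False assms(2)
    by (auto simp add: ennpowr_def intro!: ennreal_leI powr_mono2)
qed

lemma ennpowr_ennreal: "0 \<le> t \<Longrightarrow> ennpowr (ennreal t) r = ennreal (t powr r)"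
  by (simp add: ennpowr_def)

lemma ennpowr_cmult:
  assumes "0 < K" "0 < r"
  shows "ennpowr (ennreal K * Y) r = ennreal (K powr r) * ennpowr Y r"
proof (cases "Y = \<infinity>")
  case True
  then show ?thesis using assms by (simp add: ennpowr_def ennreal_mult_top)
next
  case False
  then obtain y where y: "Y = ennreal y" "0 \<le> y" by (cases Y) auto
  have "ennreal K * Y = ennreal (K * y)" using y assms by (simp add: ennreal_mult)
  then have "ennpowr (ennreal K * Y) r = ennreal ((K*y) powr r)"
    using y assms by (simp add: ennpowr_ennreal)
  also have "\<dots> = ennreal (K powr r) * ennreal (y powr r)"
    using y assms by (simp add: powr_mult ennreal_mult)
  finally show ?thesis using y by (simp add: ennpowr_ennreal)
qed

lemma ennpowr_sq: "ennpowr (ennreal (cmod z)) 2 = ennreal ((cmod z)\<^sup>2)"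
  by (simp add: ennpowr_ennreal)

lemma l2norm_lower:
  assumes "finite F"
  shows "ennreal (sqrt (\<Sum>i\<in>F. (cmod (f i))\<^sup>2)) \<le> l2norm f"
proof -
  let ?S = "\<Sum>k. ennpowr (ennreal (cmod (f k))) 2"
  have eq: "?S = (\<Sum>k. ennreal ((cmod (f k))\<^sup>2))" by (simp add: ennpowr_sq)
  have "(\<Sum>i\<in>F. ennreal ((cmod (f i))\<^sup>2)) \<le> (\<Sum>k. ennreal ((cmod (f k))\<^sup>2))"
    by (rule sum_le_suminf) (auto simp: assms)
  then have le: "ennreal (\<Sum>i\<in>F. (cmod (f i))\<^sup>2) \<le> ?S" using eq by simp
  show ?thesis
  proof (cases "?S = \<infinity>")
    case True then show ?thesis by (simp add: l2norm_def lp_norm_def ennpowr_def)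
  next
    case False
    then obtain s where s: "?S = ennreal s" "0 \<le> s" by (cases ?S) auto
    with le have "(\<Sum>i\<in>F. (cmod (f i))\<^sup>2) \<le> s"
      by (simp add: ennreal_le_iff)
    then have "sqrt (\<Sum>i\<in>F. (cmod (f i))\<^sup>2) \<le> s powr (1/2)"
      using s by (simp add: powr_half_sqrt)
    then show ?thesis using s by (simp add: l2norm_def lp_norm_def ennpowr_def)
  qed
qed

lemma l2norm_fin:
  assumes "\<forall>i\<ge>B. f i = 0"
  shows "l2norm f = ennreal (sqrt (\<Sum>i<B. (cmod (f i))\<^sup>2))"
proof -
  have "(\<Sum>k. ennpowr (ennreal (cmod (f k))) 2) = (\<Sum>k<B. ennpowr (ennreal (cmod (f k))) 2)"
    by (rule suminf_finite) (use assms in \<open>auto simp: ennpowr_def\<close>)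
  also have "\<dots> = ennreal (\<Sum>i<B. (cmod (f i))\<^sup>2)" by (simp add: ennpowr_sq)
  finally show ?thesis
    by (simp add: l2norm_def lp_norm_def ennpowr_def powr_half_sqrt sum_nonneg)
qed

lemma in_l2_fin:
  assumes "\<forall>i\<ge>B. f i = 0"
  shows "in_l2 f"
  unfolding in_l2_def
  by (rule summable_finite[of "{..<B}"]) (use assms in auto)



lemma kernel_exists:
  fixes c :: "nat \<Rightarrow> nat \<Rightarrow> complex"
  assumes "finite T" "d < card T"
  shows "\<exists>l. (\<exists>m\<in>T. l m \<noteq> 0) \<and> (\<forall>i<d. (\<Sum>m\<in>T. l m * c m i) = 0)"
  using assms
proof (induction d arbitrary: T c)
  case 0
  then obtain m where "m \<in> T" by (metis card.empty card_gt_0_iff ex_in_conv)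
  then show ?case by (intro exI[of _ "\<lambda>_. 1"]) auto
next
  case (Suc d)
  show ?case
  proof (cases "\<forall>m\<in>T. c m d = 0")
    case True
    from Suc.IH[of T c] Suc.prems obtain l where l: "\<exists>m\<in>T. l m \<noteq> 0"
      "\<forall>i<d. (\<Sum>m\<in>T. l m * c m i) = 0" by auto
    have "\<forall>i<Suc d. (\<Sum>m\<in>T. l m * c m i) = 0"
      using l(2) True by (auto simp: less_Suc_eq)
    with l(1) show ?thesis by blast
  next
    case False
    then obtain m0 where m0: "m0 \<in> T" "c m0 d \<noteq> 0" by auto
    define T' where "T' = T - {m0}"
    define c' where "c' = (\<lambda>m i. c m i - c m d / c m0 d * c m0 i)"
    have fT': "finite T'" using Suc.prems unfolding T'_def by auto
    have cT': "d < card T'" using Suc.prems m0 unfolding T'_def by auto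
    from Suc.IH[OF fT' cT', of c'] obtain l' where l': "\<exists>m\<in>T'. l' m \<noteq> 0"
      "\<forall>i<d. (\<Sum>m\<in>T'. l' m * c' m i) = 0" by auto
    have l'all: "(\<Sum>m\<in>T'. l' m * c' m i) = 0" if "i < Suc d" for i
    proof (cases "i < d")
      case True then show ?thesis using l'(2) by auto
    next
      case False
      then have "i = d" using that by auto
      then show ?thesis using m0 by (simp add: c'_def)
    qed
    define K where "K = (\<Sum>m\<in>T'. l' m * c m d) / c m0 d"
    define l where "l = l'(m0 := - K)"
    have "(\<Sum>m\<in>T. l m * c m i) = 0" if "i < Suc d" for i
    proof -
      have split: "(\<Sum>m\<in>T. l m * c m i) = l m0 * c m0 i + (\<Sum>m\<in>T'. l m * c m i)"
        using Suc.prems m0 unfolding T'_def by (simp add: sum.remove)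
      have "(\<Sum>m\<in>T'. l m * c m i) = (\<Sum>m\<in>T'. l' m * c' m i + l' m * c m d / c m0 d * c m0 i)"
        by (rule sum.cong) (auto simp: l_def T'_def c'_def algebra_simps)
      also have "\<dots> = (\<Sum>m\<in>T'. l' m * c' m i) + K * c m0 i"
        by (simp add: sum.distrib K_def sum_divide_distrib sum_distrib_right)
      also have "\<dots> = K * c m0 i" using l'all[OF that] by simp
      finally show ?thesis using split by (simp add: l_def)
    qed
    moreover have "\<exists>m\<in>T. l m \<noteq> 0" using l'(1) unfolding l_def T'_def by auto
    ultimately show ?thesis by blast
  qed
qed

lemma l2_linear_zero: "l2_linear P \<Longrightarrow> P (\<lambda>k. 0) = (\<lambda>k. 0)"
proof -
  assume P: "l2_linear P"
  have z: "in_l2 (\<lambda>k. 0)" unfolding in_l2_def by simp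
  have "P (\<lambda>k. 0 * (0::complex)) = (\<lambda>k. 0 * P (\<lambda>k. 0) k)"
    using P z unfolding l2_linear_def by blast
  then show ?thesis by simp
qed

lemma l2_linear_sum:
  assumes P: "l2_linear P" and fin: "finite F" and supp: "\<forall>m\<in>F. \<forall>i\<ge>B. g m i = 0"
  shows "P (\<lambda>k. \<Sum>m\<in>F. l m * g m k) = (\<lambda>k. \<Sum>m\<in>F. l m * P (g m) k)"
  using fin supp
proof (induction F rule: finite_induct)
  case empty
  then show ?case using l2_linear_zero[OF P] by simp
next
  case (insert a F)
  have i1: "in_l2 (\<lambda>k. l a * g a k)" using insert.prems by (intro in_l2_fin[of B]) auto
  have i2: "in_l2 (\<lambda>k. \<Sum>m\<in>F. l m * g m k)" using insert.prems by (intro in_l2_fin[of B]) auto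
  have ia: "in_l2 (g a)" using insert.prems by (intro in_l2_fin[of B]) auto
  have add: "P (\<lambda>k. (\<lambda>k. l a * g a k) k + (\<lambda>k. \<Sum>m\<in>F. l m * g m k) k)
      = (\<lambda>k. P (\<lambda>k. l a * g a k) k + P (\<lambda>k. \<Sum>m\<in>F. l m * g m k) k)"
    using P i1 i2 unfolding l2_linear_def by blast
  have sc: "P (\<lambda>k. l a * g a k) = (\<lambda>k. l a * P (g a) k)"
    using P ia unfolding l2_linear_def by blast
  show ?case using add sc insert by simp
qed



definition lo :: "nat \<Rightarrow> nat" where "lo m = 2^m div 2"
definition Jn :: "nat \<Rightarrow> nat" where "Jn m = 2^m - lo m"

definition hv :: "nat \<Rightarrow> nat \<Rightarrow> complex" where
  "hv m i = (if lo m \<le> i \<and> i < 2^m then 1 / of_nat (Jn m) else 0)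
          + (if 2^(m+1) \<le> i \<and> i < 2^(m+2) then - 1 / 2^(m+1) else 0)"

lemma lo_le: "lo m \<le> 2^m" unfolding lo_def by simp

lemma Jn_pos: "0 < Jn m"
  unfolding Jn_def lo_def by (simp add: less_mult_imp_div_less)

lemma Jn_bound: "2^(m+1) \<le> 4 * Jn m"
proof -
  have "2 * (2^m div 2) \<le> (2::nat)^m" by simp
  then show ?thesis unfolding Jn_def lo_def by simp
qed

lemma lo_eq: "1 \<le> m \<Longrightarrow> lo m = 2^(m-1)"
proof -
  assume "1 \<le> m"
  then obtain q where q: "m = Suc q" by (cases m) auto
  show ?thesis unfolding lo_def q by simp
qed

lemma hv_zero_hi: "2^(m+2) \<le> i \<Longrightarrow> hv m i = 0"
proof -
  assume a: "2^(m+2) \<le> i"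
  have "(2::nat)^m \<le> 2^(m+2)" by (simp add: power_increasing)
  then show ?thesis using a unfolding hv_def by auto
qed

lemma hv_zero_lo: "i < lo m \<Longrightarrow> hv m i = 0"
proof -
  assume a: "i < lo m"
  have "lo m \<le> 2^(m+1)" using lo_le[of m] by (simp add: order_trans)
  then show ?thesis using a unfolding hv_def by auto
qed

lemma sum_if_const:
  "finite X \<Longrightarrow> (\<Sum>i\<in>X. if Q i then a else 0) = of_nat (card {i\<in>X. Q i}) * a"
  by (simp add: sum.inter_filter[symmetric])

lemma cum_a: "j < lo m \<Longrightarrow> (\<Sum>i\<le>j. hv m i) = 0"
  by (rule sum.neutral) (auto intro!: hv_zero_lo)

lemma cum_b: assumes "2^m \<le> j" "j < 2^(m+1)" shows "(\<Sum>i\<le>j. hv m i) = 1"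
proof -
  have s1: "{i\<in>{..j}. lo m \<le> i \<and> i < 2^m} = {lo m..<2^m}" using assms by auto
  have s2: "{i\<in>{..j}. 2^(m+1) \<le> i \<and> i < (2::nat)^(m+2)} = {}" using assms by auto
  have "(\<Sum>i\<le>j. hv m i) = of_nat (Jn m) * (1 / of_nat (Jn m))"
    unfolding hv_def sum.distrib
    by (simp only: sum_if_const finite_atMost s1 s2) (simp add: Jn_def)
  then show ?thesis using Jn_pos[of m] by simp
qed

lemma cum_c: assumes "2^(m+2) \<le> j" shows "(\<Sum>i\<le>j. hv m i) = 0"
proof -
  have a: "(2::nat)^m \<le> 2^(m+2)" by (simp add: power_increasing)
  have s1: "{i\<in>{..j}. lo m \<le> i \<and> i < 2^m} = {lo m..<2^m}" using assms a by auto
  have s2: "{i\<in>{..j}. 2^(m+1) \<le> i \<and> i < (2::nat)^(m+2)} = {2^(m+1)..<2^(m+2)}" using assms by auto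
  have c2: "card {(2::nat)^(m+1)..<2^(m+2)} = 2^(m+1)" by simp
  have "(\<Sum>i\<le>j. hv m i) = of_nat (Jn m) * (1 / of_nat (Jn m)) + of_nat (2^(m+1)) * (-1 / 2^(m+1))"
    unfolding hv_def sum.distrib
    by (simp only: sum_if_const finite_atMost s1 s2 c2) (simp add: Jn_def)
  then show ?thesis using Jn_pos[of m] by simp
qed

lemma hv_sq: "(cmod (hv m i))\<^sup>2 = (if lo m \<le> i \<and> i < 2^m then 1 / (real (Jn m))\<^sup>2 else 0)
          + (if 2^(m+1) \<le> i \<and> i < 2^(m+2) then 1 / (2^(m+1))\<^sup>2 else 0)"
proof -
  have d: "\<not> (lo m \<le> i \<and> i < 2^m \<and> 2^(m+1) \<le> i)" by auto
  show ?thesis unfolding hv_def using d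
    by (auto simp: norm_divide power_divide norm_power)
qed

lemma hv_normsq: assumes "2^(m+2) \<le> B"
  shows "(\<Sum>i<B. (cmod (hv m i))\<^sup>2) = 1 / real (Jn m) + 1 / 2^(m+1)"
proof -
  have a: "(2::nat)^m \<le> 2^(m+2)" by (simp add: power_increasing)
  have s1: "{i\<in>{..<B}. lo m \<le> i \<and> i < 2^m} = {lo m..<2^m}" using assms a by auto
  have s2: "{i\<in>{..<B}. 2^(m+1) \<le> i \<and> i < (2::nat)^(m+2)} = {2^(m+1)..<2^(m+2)}" using assms by auto
  have c2: "card {(2::nat)^(m+1)..<2^(m+2)} = 2^(m+1)" by simp
  have "(\<Sum>i<B. (cmod (hv m i))\<^sup>2) = real (Jn m) * (1 / (real (Jn m))\<^sup>2) + real (2^(m+1)) * (1 / (2^(m+1))\<^sup>2)"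
    unfolding hv_sq sum.distrib
    by (simp only: sum_if_const finite_lessThan s1 s2 c2) (simp add: Jn_def)
  then show ?thesis using Jn_pos[of m] by (simp add: power2_eq_square)
qed

lemma hv_disj: assumes "m + 3 \<le> m'" "hv m i \<noteq> 0" shows "hv m' i = 0"
proof -
  have "i < 2^(m+2)" using assms(2) hv_zero_hi[of m i] by (meson not_le)
  moreover have "(2::nat)^(m+2) \<le> 2^(m'-1)" using assms(1) by (intro power_increasing) auto
  moreover have "2^(m'-1) = lo m'" using lo_eq[of m'] assms(1) by simp
  ultimately show ?thesis by (intro hv_zero_lo) simp
qed




lemma mod3_sep: "(m::nat) mod 3 = k mod 3 \<Longrightarrow> m \<noteq> k \<Longrightarrow> m + 3 \<le> k \<or> k + 3 \<le> m"
proof -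
  assume a: "m mod 3 = k mod 3" "m \<noteq> k"
  have m: "m = 3*(m div 3) + m mod 3" by simp
  have k: "k = 3*(k div 3) + k mod 3" by simp
  have "m div 3 \<noteq> k div 3" using a m k by metis
  then have "m div 3 + 1 \<le> k div 3 \<or> k div 3 + 1 \<le> m div 3" by linarith
  then have "3*(m div 3) + 3 \<le> 3*(k div 3) \<or> 3*(k div 3) + 3 \<le> 3*(m div 3)" by linarith
  then show ?thesis using a m k by linarith
qed

lemma cum_x:
  assumes T: "finite T" "\<forall>k\<in>T. k mod 3 = r" and k: "k \<in> T" and j: "2^k \<le> j" "j < 2^(k+1)"
  shows "(\<Sum>i\<le>j. \<Sum>m\<in>T. l m * hv m i) = l k"
proof -
  have "(\<Sum>i\<le>j. \<Sum>m\<in>T. l m * hv m i) = (\<Sum>m\<in>T. l m * (\<Sum>i\<le>j. hv m i))"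
    by (simp add: sum.swap[of _ T] sum_distrib_left)
  also have "\<dots> = l k * (\<Sum>i\<le>j. hv k i) + (\<Sum>m\<in>T-{k}. l m * (\<Sum>i\<le>j. hv m i))"
    using T k by (simp add: sum.remove)
  also have "(\<Sum>m\<in>T-{k}. l m * (\<Sum>i\<le>j. hv m i)) = 0"
  proof (rule sum.neutral, rule ballI)
    fix m assume m: "m \<in> T - {k}"
    then have "m + 3 \<le> k \<or> k + 3 \<le> m" using T k by (intro mod3_sep) auto
    then have "(\<Sum>i\<le>j. hv m i) = 0"
    proof
      assume a: "m + 3 \<le> k"
      have "(2::nat)^(m+2) \<le> 2^k" using a by (intro power_increasing) auto
      then show ?thesis using j by (intro cum_c) auto
    next
      assume a: "k + 3 \<le> m"
      have "(2::nat)^(k+1) \<le> 2^(m-1)" using a by (intro power_increasing) auto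
      moreover have "lo m = 2^(m-1)" using a by (intro lo_eq) auto
      ultimately show ?thesis using j by (intro cum_a) auto
    qed
    then show "l m * (\<Sum>i\<le>j. hv m i) = 0" by simp
  qed
  finally show ?thesis using cum_b[OF j] by simp
qed

lemma x_pointwise:
  assumes T: "finite T" "\<forall>k\<in>T. k mod 3 = r"
  shows "(cmod (\<Sum>m\<in>T. l m * hv m i))\<^sup>2 \<le> (\<Sum>m\<in>T. (cmod (l m))\<^sup>2 * (cmod (hv m i))\<^sup>2)"
proof (cases "\<exists>m0\<in>T. hv m0 i \<noteq> 0")
  case True
  then obtain m0 where m0: "m0 \<in> T" "hv m0 i \<noteq> 0" by auto
  have z: "(\<Sum>m\<in>T-{m0}. l m * hv m i) = 0"
  proof (rule sum.neutral, rule ballI)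
    fix m assume m: "m \<in> T - {m0}"
    then have "m + 3 \<le> m0 \<or> m0 + 3 \<le> m" using T m0 by (intro mod3_sep) auto
    then have "hv m i = 0"
    proof
      assume "m + 3 \<le> m0"
      then show ?thesis using hv_disj[of m m0 i] m0 by auto
    next
      assume "m0 + 3 \<le> m"
      then show ?thesis using hv_disj[of m0 m i] m0 by auto
    qed
    then show "l m * hv m i = 0" by simp
  qed
  have "(\<Sum>m\<in>T. l m * hv m i) = l m0 * hv m0 i"
    using T m0 z by (simp add: sum.remove)
  then have "(cmod (\<Sum>m\<in>T. l m * hv m i))\<^sup>2 = (cmod (l m0))\<^sup>2 * (cmod (hv m0 i))\<^sup>2"
    by (simp add: norm_mult power_mult_distrib)
  also have "\<dots> \<le> (\<Sum>m\<in>T. (cmod (l m))\<^sup>2 * (cmod (hv m i))\<^sup>2)"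
    using T m0 by (intro member_le_sum) auto
  finally show ?thesis .
next
  case False
  then have "(\<Sum>m\<in>T. l m * hv m i) = 0" by simp
  then show ?thesis by (simp add: sum_nonneg)
qed

lemma block_disj: "2^k \<le> (j::nat) \<Longrightarrow> j < 2^(k+1) \<Longrightarrow> 2^k' \<le> j \<Longrightarrow> j < 2^(k'+1) \<Longrightarrow> k = k'"
proof (rule ccontr)
  assume a: "2^k \<le> j" "j < 2^(k+1)" "2^k' \<le> j" "j < 2^(k'+1)" "k \<noteq> k'"
  show False
  proof (cases "k < k'")
    case True
    then have "(2::nat)^(k+1) \<le> 2^k'" by (intro power_increasing) auto
    then show False using a by auto
  next
    case False
    then have "(2::nat)^(k'+1) \<le> 2^k" using a(5) by (intro power_increasing) auto
    then show False using a by auto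
  qed
qed

lemma sigma_bound:
  "(sigma \<alpha> k)\<^sup>2 * (1 / real (Jn k) + 1 / 2^(k+1)) \<le> 5 * (\<Sum>j\<in>{2^k..<2^(k+1)}. (cmod (\<alpha> j))\<^sup>2)"
proof -
  let ?A = "\<Sum>j\<in>{2^k..<2^(k+1)}. (cmod (\<alpha> j))\<^sup>2"
  have s2: "(sigma \<alpha> k)\<^sup>2 = (\<Sum>j\<in>{2^k..<2^(k+1)}. real (j + 1) * (cmod (\<alpha> j))\<^sup>2)"
    unfolding sigma_def by (simp add: sum_nonneg)
  also have "\<dots> \<le> (\<Sum>j\<in>{2^k..<2^(k+1)}. 2^(k+1) * (cmod (\<alpha> j))\<^sup>2)"
  proof (rule sum_mono)
    fix j assume "j \<in> {2^k..<(2::nat)^(k+1)}"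
    then have "j+1 \<le> (2::nat)^(k+1)" by auto
    then have "real (j+1) \<le> real ((2::nat)^(k+1))" by (simp only: of_nat_le_iff)
    then have "real (j+1) \<le> 2^(k+1)" by simp
    then show "real (j + 1) * (cmod (\<alpha> j))\<^sup>2 \<le> 2^(k+1) * (cmod (\<alpha> j))\<^sup>2"
      by (intro mult_right_mono) auto
  qed
  also have "\<dots> = 2^(k+1) * ?A" by (simp add: sum_distrib_left)
  finally have le1: "(sigma \<alpha> k)\<^sup>2 \<le> 2^(k+1) * ?A" .
  have "real ((2::nat)^(k+1)) \<le> real (4 * Jn k)" using Jn_bound[of k] by (simp only: of_nat_le_iff)
  then have J4: "(2::real)^(k+1) \<le> 4 * real (Jn k)" by simp
  have Jp: "0 < real (Jn k)" using Jn_pos[of k] by simp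
  have "1 / real (Jn k) \<le> 4 / 2^(k+1)"
    using J4 Jp by (simp add: divide_simps)
  then have N: "1 / real (Jn k) + 1 / 2^(k+1) \<le> 5 / 2^(k+1)" by simp
  have "(sigma \<alpha> k)\<^sup>2 * (1 / real (Jn k) + 1 / 2^(k+1)) \<le> (2^(k+1) * ?A) * (5 / 2^(k+1))"
  proof (rule mult_mono)
    show "0 \<le> 2^(k+1) * ?A" by (simp add: sum_nonneg)
  qed (use le1 N in auto)
  also have "\<dots> = 5 * ?A" by simp
  finally show ?thesis .
qed



lemma core:
  fixes \<alpha> l :: "nat \<Rightarrow> complex" and cc v :: "nat \<Rightarrow> nat \<Rightarrow> complex"
  assumes T: "finite T" "T \<noteq> {}" "\<forall>k\<in>T. k mod 3 = r"
  and P: "l2_linear P"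
  and cc: "\<forall>m\<in>T. P (hv m) = (\<lambda>k. \<Sum>i<d. cc m i * v i k)"
  and ker: "\<forall>i<d. (\<Sum>m\<in>T. l m * cc m i) = 0"
  and B: "\<forall>m\<in>T. 2^(m+2) \<le> B"
  and nrm: "(\<Sum>i<B. (cmod (\<Sum>m\<in>T. l m * hv m i))\<^sup>2) = 1"
  shows "ennreal (Min ((\<lambda>k. sigma \<alpha> k / sqrt 5) ` T)) \<le> opnorm (\<lambda>f k. R_op \<alpha> f k - P f k)"
proof -
  define x where "x = (\<lambda>i. \<Sum>m\<in>T. l m * hv m i)"
  define \<mu> where "\<mu> = Min ((\<lambda>k. sigma \<alpha> k / sqrt 5) ` T)"
  define A where "A = (\<lambda>k. \<Sum>j\<in>{2^k..<2^(k+1)}. (cmod (\<alpha> j))\<^sup>2)"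
  define N where "N = (\<lambda>k. 1 / real (Jn k) + 1 / 2^(k+1))"
  have supp: "\<forall>m\<in>T. \<forall>i\<ge>B. hv m i = 0"
  proof (intro ballI allI impI)
    fix m i assume a: "m \<in> T" "B \<le> i"
    then have "2^(m+2) \<le> i" using B by (meson order_trans)
    then show "hv m i = 0" by (rule hv_zero_hi)
  qed
  have xsupp: "\<forall>i\<ge>B. x i = 0" unfolding x_def using supp by auto
  have xl2: "in_l2 x" using in_l2_fin[OF xsupp] .
  have xn: "l2norm x \<le> 1" using l2norm_fin[OF xsupp] nrm unfolding x_def by simp
  have "P x = (\<lambda>k. \<Sum>m\<in>T. l m * P (hv m) k)"
    unfolding x_def by (rule l2_linear_sum[OF P T(1) supp])
  also have "\<dots> = (\<lambda>k. \<Sum>m\<in>T. l m * (\<Sum>i<d. cc m i * v i k))"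
    using cc by (intro ext sum.cong) auto
  also have "\<dots> = (\<lambda>k. \<Sum>i<d. (\<Sum>m\<in>T. l m * cc m i) * v i k)"
    by (simp add: sum_distrib_left sum_distrib_right sum.swap[of _ T] mult.assoc)
  also have "\<dots> = (\<lambda>k. 0)" using ker by simp
  finally have Px: "P x = (\<lambda>k. 0)" .
  have "l2norm (\<lambda>k. R_op \<alpha> x k - P x k) \<le> opnorm (\<lambda>f k. R_op \<alpha> f k - P f k)"
    unfolding opnorm_def by (rule SUP_upper) (simp add: xl2 xn)
  then have op: "l2norm (R_op \<alpha> x) \<le> opnorm (\<lambda>f k. R_op \<alpha> f k - P f k)" using Px by simp
  define F where "F = (\<Union>k\<in>T. {2^k..<(2::nat)^(k+1)})"
  have fF: "finite F" unfolding F_def using T(1) by auto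
  have low: "ennreal (sqrt (\<Sum>j\<in>F. (cmod (R_op \<alpha> x j))\<^sup>2)) \<le> l2norm (R_op \<alpha> x)"
    by (rule l2norm_lower[OF fF])
  have Rx: "R_op \<alpha> x j = \<alpha> j * l k" if "k \<in> T" "2^k \<le> j" "j < 2^(k+1)" for k j
    unfolding R_op_def x_def using cum_x[OF T(1) T(3) that] by simp
  have "(\<Sum>j\<in>F. (cmod (R_op \<alpha> x j))\<^sup>2) = (\<Sum>k\<in>T. \<Sum>j\<in>{2^k..<2^(k+1)}. (cmod (R_op \<alpha> x j))\<^sup>2)"
    unfolding F_def
  proof (rule sum.UNION_disjoint[OF T(1)])
    show "\<forall>i\<in>T. finite {2 ^ i..<(2::nat) ^ (i + 1)}" by simp
    show "\<forall>i\<in>T. \<forall>j\<in>T. i \<noteq> j \<longrightarrow> {2 ^ i..<(2::nat) ^ (i + 1)} \<inter> {2 ^ j..<2 ^ (j + 1)} = {}"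
      using block_disj by fastforce
  qed
  also have "\<dots> = (\<Sum>k\<in>T. (cmod (l k))\<^sup>2 * A k)"
    unfolding A_def sum_distrib_left
    by (intro sum.cong refl) (auto simp: Rx norm_mult power_mult_distrib)
  finally have sumF: "(\<Sum>j\<in>F. (cmod (R_op \<alpha> x j))\<^sup>2) = (\<Sum>k\<in>T. (cmod (l k))\<^sup>2 * A k)" .
  have "\<forall>k\<in>T. 0 \<le> sigma \<alpha> k / sqrt 5" by (simp add: sigma_def sum_nonneg)
  then have mu0: "0 \<le> \<mu>" unfolding \<mu>_def using T(1,2) by simp
  have mule: "\<mu> \<le> sigma \<alpha> k / sqrt 5" if "k \<in> T" for k
    unfolding \<mu>_def using T(1) that by auto
  have one: "1 \<le> (\<Sum>m\<in>T. (cmod (l m))\<^sup>2 * N m)"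
  proof -
    have "1 = (\<Sum>i<B. (cmod (x i))\<^sup>2)" using nrm unfolding x_def by simp
    also have "\<dots> \<le> (\<Sum>i<B. \<Sum>m\<in>T. (cmod (l m))\<^sup>2 * (cmod (hv m i))\<^sup>2)"
      unfolding x_def by (intro sum_mono x_pointwise[OF T(1) T(3)])
    also have "\<dots> = (\<Sum>m\<in>T. (cmod (l m))\<^sup>2 * (\<Sum>i<B. (cmod (hv m i))\<^sup>2))"
      by (simp add: sum.swap[of _ "{..<B}"] sum_distrib_left)
    also have "\<dots> = (\<Sum>m\<in>T. (cmod (l m))\<^sup>2 * N m)"
      unfolding N_def using B by (intro sum.cong refl) (simp add: hv_normsq)
    finally show ?thesis .
  qed
  have each: "\<mu>\<^sup>2 * N k \<le> A k" if "k \<in> T" for k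
  proof -
    have s0: "0 \<le> sigma \<alpha> k" by (simp add: sigma_def sum_nonneg)
    have "\<mu>\<^sup>2 \<le> (sigma \<alpha> k / sqrt 5)\<^sup>2" using mule[OF that] mu0 by (intro power_mono) auto
    also have "\<dots> = (sigma \<alpha> k)\<^sup>2 / 5" by (simp add: power_divide)
    finally have m2: "\<mu>\<^sup>2 \<le> (sigma \<alpha> k)\<^sup>2 / 5" .
    have N0: "0 \<le> N k" unfolding N_def by simp
    have "\<mu>\<^sup>2 * N k \<le> (sigma \<alpha> k)\<^sup>2 / 5 * N k" using m2 N0 by (rule mult_right_mono)
    also have "\<dots> \<le> A k" using sigma_bound[of \<alpha> k] unfolding N_def A_def by simp
    finally show ?thesis .
  qed
  have "\<mu>\<^sup>2 \<le> \<mu>\<^sup>2 * (\<Sum>m\<in>T. (cmod (l m))\<^sup>2 * N m)"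
    using one mult_left_mono[OF one, of "\<mu>\<^sup>2"] by simp
  also have "\<dots> = (\<Sum>m\<in>T. (cmod (l m))\<^sup>2 * (\<mu>\<^sup>2 * N m))"
    by (simp add: sum_distrib_left mult.assoc mult.left_commute)
  also have "\<dots> \<le> (\<Sum>m\<in>T. (cmod (l m))\<^sup>2 * A m)"
    using each by (intro sum_mono mult_left_mono) auto
  finally have "\<mu>\<^sup>2 \<le> (\<Sum>j\<in>F. (cmod (R_op \<alpha> x j))\<^sup>2)" using sumF by simp
  then have "\<mu> \<le> sqrt (\<Sum>j\<in>F. (cmod (R_op \<alpha> x j))\<^sup>2)" using mu0 real_le_rsqrt by blast
  then have "ennreal \<mu> \<le> ennreal (sqrt (\<Sum>j\<in>F. (cmod (R_op \<alpha> x j))\<^sup>2))" by (rule ennreal_leI)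
  then show ?thesis using low op unfolding \<mu>_def by (meson order_trans)
qed



lemma hv_l2: "in_l2 (hv m)"
  by (rule in_l2_fin[of "2^(m+2)"]) (auto intro: hv_zero_hi)

lemma approx_lower:
  assumes T: "finite T" "T \<noteq> {}" "\<forall>k\<in>T. k mod 3 = r"
  shows "ennreal (Min ((\<lambda>k. sigma \<alpha> k / sqrt 5) ` T)) \<le> approx_number (R_op \<alpha>) (card T)"
  unfolding approx_number_def
proof (rule INF_greatest)
  fix P assume "P \<in> {P. l2_linear P \<and> rank_le P (card T - 1)}"
  then have P: "l2_linear P" and rank: "rank_le P (card T - 1)" by auto
  define d where "d = card T - 1"
  obtain v where v: "\<forall>f. in_l2 f \<longrightarrow> (\<exists>c. P f = (\<lambda>k. \<Sum>i<d. c i * v i k))"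
    using rank unfolding rank_le_def d_def by blast
  define cc where "cc = (\<lambda>m. SOME c. P (hv m) = (\<lambda>k. \<Sum>i<d. c i * v i k))"
  have cc: "\<forall>m\<in>T. P (hv m) = (\<lambda>k. \<Sum>i<d. cc m i * v i k)"
  proof
    fix m
    have "\<exists>c. P (hv m) = (\<lambda>k. \<Sum>i<d. c i * v i k)" using v hv_l2 by blast
    then show "P (hv m) = (\<lambda>k. \<Sum>i<d. cc m i * v i k)" unfolding cc_def by (rule someI_ex)
  qed
  have dT: "d < card T" unfolding d_def using T(1,2) by (simp add: card_gt_0_iff)
  obtain l0 where l0: "\<exists>m\<in>T. l0 m \<noteq> 0" "\<forall>i<d. (\<Sum>m\<in>T. l0 m * cc m i) = 0"
    using kernel_exists[OF T(1) dT, of cc] by blast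
  define B where "B = (2::nat)^(Max T + 2)"
  have B: "\<forall>m\<in>T. 2^(m+2) \<le> B"
    unfolding B_def using T(1) by (auto intro!: power_increasing)
  define x0 where "x0 = (\<lambda>i. \<Sum>m\<in>T. l0 m * hv m i)"
  define s where "s = (\<Sum>i<B. (cmod (x0 i))\<^sup>2)"
  have s0: "0 \<le> s" unfolding s_def by (simp add: sum_nonneg)
  have spos: "0 < s"
  proof (rule ccontr)
    assume "\<not> 0 < s"
    then have "s = 0" using s0 by simp
    then have z: "\<forall>i\<in>{..<B}. (cmod (x0 i))\<^sup>2 = 0" unfolding s_def
      by (subst sum_nonneg_eq_0_iff[symmetric]) auto
    obtain m0 where m0: "m0 \<in> T" "l0 m0 \<noteq> 0" using l0(1) by blast
    have "(\<Sum>i\<le>2^m0. x0 i) = l0 m0" unfolding x0_def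
      by (rule cum_x[OF T(1) T(3) m0(1)]) auto
    moreover have "(\<Sum>i\<le>2^m0. x0 i) = 0"
    proof (rule sum.neutral, rule ballI)
      fix i assume i: "i \<in> {..(2::nat)^m0}"
      have "(2::nat)^m0 < 2^(m0+2)" by simp
      then have "i < B" using i B m0(1) by (meson atMost_iff le_less_trans less_le_trans)
      then show "x0 i = 0" using z by simp
    qed
    ultimately show False using m0(2) by simp
  qed
  define c where "c = complex_of_real (sqrt s)"
  have c0: "c \<noteq> 0" unfolding c_def using spos by simp
  define l where "l = (\<lambda>m. l0 m / c)"
  have ker: "\<forall>i<d. (\<Sum>m\<in>T. l m * cc m i) = 0"
  proof (intro allI impI)
    fix i assume "i < d"
    have "(\<Sum>m\<in>T. l m * cc m i) = (\<Sum>m\<in>T. l0 m * cc m i) / c"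
      unfolding l_def by (simp add: sum_divide_distrib)
    then show "(\<Sum>m\<in>T. l m * cc m i) = 0" using l0(2) \<open>i < d\<close> by simp
  qed
  have xeq: "(\<Sum>m\<in>T. l m * hv m i) = x0 i / c" for i
    unfolding l_def x0_def by (simp add: sum_divide_distrib)
  have nrm: "(\<Sum>i<B. (cmod (\<Sum>m\<in>T. l m * hv m i))\<^sup>2) = 1"
  proof -
    have "(\<Sum>i<B. (cmod (\<Sum>m\<in>T. l m * hv m i))\<^sup>2) = (\<Sum>i<B. (cmod (x0 i))\<^sup>2 / s)"
      unfolding xeq c_def using s0 by (simp add: norm_divide power_divide)
    also have "\<dots> = s / s" unfolding s_def by (rule sum_divide_distrib[symmetric])
    finally show ?thesis using spos by simp
  qed
  show "ennreal (Min ((\<lambda>k. sigma \<alpha> k / sqrt 5) ` T)) \<le> opnorm (\<lambda>f k. R_op \<alpha> f k - P f k)"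
    by (rule core[OF T P cc ker B nrm])
qed



lemma comb:
  fixes a b :: "nat \<Rightarrow> ennreal"
  assumes "finite S" "\<forall>T\<subseteq>S. T \<noteq> {} \<longrightarrow> (\<exists>k\<in>T. b k \<le> a (card T))"
  shows "(\<Sum>k\<in>S. b k) \<le> (\<Sum>n<card S. a (Suc n))"
  using assms
proof (induction "card S" arbitrary: S)
  case 0
  then show ?case by simp
next
  case (Suc N)
  then have ne: "S \<noteq> {}" by auto
  then obtain k where k: "k \<in> S" "b k \<le> a (card S)" using Suc.prems by blast
  define S' where "S' = S - {k}"
  have cS': "N = card S'" using Suc.hyps(2) k Suc.prems(1) unfolding S'_def by simp
  have fS': "finite S'" using Suc.prems(1) unfolding S'_def by simp
  have hS': "\<forall>T\<subseteq>S'. T \<noteq> {} \<longrightarrow> (\<exists>k\<in>T. b k \<le> a (card T))"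
    using Suc.prems(2) unfolding S'_def by blast
  have IH: "(\<Sum>k\<in>S'. b k) \<le> (\<Sum>n<N. a (Suc n))" using Suc.hyps(1)[OF cS' fS' hS'] cS' by simp
  have "(\<Sum>k\<in>S. b k) = b k + (\<Sum>k\<in>S'. b k)"
    unfolding S'_def using Suc.prems(1) k(1) by (simp add: sum.remove)
  also have "\<dots> \<le> a (Suc N) + (\<Sum>n<N. a (Suc n))"
    using k(2) IH Suc.hyps(2) by (intro add_mono) auto
  also have "\<dots> = (\<Sum>n<card S. a (Suc n))" using Suc.hyps(2)[symmetric] by (simp add: add.commute)
  finally show ?case .
qed

lemma main_sum:
  assumes p: "0 < p"
  shows "(\<Sum>k. ennpowr (ennreal (sigma \<alpha> k / sqrt 5)) p)
     \<le> 3 * (\<Sum>n. ennpowr (approx_number (R_op \<alpha>) (Suc n)) p)"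
proof -
  define a where "a = (\<lambda>n. ennpowr (approx_number (R_op \<alpha>) n) p)"
  define b where "b = (\<lambda>k. ennpowr (ennreal (sigma \<alpha> k / sqrt 5)) p)"
  define A where "A = (\<Sum>n. a (Suc n))"
  have cls: "(\<Sum>k\<in>S. b k) \<le> A" if S: "finite S" "\<forall>k\<in>S. k mod 3 = r" for S r
  proof -
    have h: "\<forall>T\<subseteq>S. T \<noteq> {} \<longrightarrow> (\<exists>k\<in>T. b k \<le> a (card T))"
    proof (intro allI impI)
      fix T assume T: "T \<subseteq> S" "T \<noteq> {}"
      have fT: "finite T" using T S finite_subset by blast
      have low: "ennreal (Min ((\<lambda>k. sigma \<alpha> k / sqrt 5) ` T)) \<le> approx_number (R_op \<alpha>) (card T)"
        using approx_lower[OF fT T(2), of r] T S by blast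
      obtain k where k: "k \<in> T" "Min ((\<lambda>k. sigma \<alpha> k / sqrt 5) ` T) = sigma \<alpha> k / sqrt 5"
      proof -
        have "Min ((\<lambda>k. sigma \<alpha> k / sqrt 5) ` T) \<in> (\<lambda>k. sigma \<alpha> k / sqrt 5) ` T"
          using fT T(2) by (intro Min_in) auto
        then show ?thesis using that by (metis (no_types, lifting) imageE)
      qed
      have "b k \<le> a (card T)" unfolding a_def b_def
        using ennpowr_mono[OF _ p] low k(2) by simp
      then show "\<exists>k\<in>T. b k \<le> a (card T)" using k(1) by blast
    qed
    have "(\<Sum>k\<in>S. b k) \<le> (\<Sum>n<card S. a (Suc n))" by (rule comb[OF S(1) h])
    also have "\<dots> \<le> A" unfolding A_def suminf_eq_SUP by (rule SUP_upper) simp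
    finally show ?thesis .
  qed
  have part: "(\<Sum>k<N. b k) \<le> 3 * A" for N
  proof -
    have U: "{..<N} = (\<Union>r\<in>{..<3::nat}. {k\<in>{..<N}. k mod 3 = r})" by auto
    have "(\<Sum>k<N. b k) = (\<Sum>r<3. \<Sum>k\<in>{k\<in>{..<N}. k mod 3 = r}. b k)"
      by (subst U, rule sum.UNION_disjoint) auto
    also have "\<dots> \<le> (\<Sum>r<(3::nat). A)" by (intro sum_mono cls) auto
    also have "\<dots> = 3 * A" by simp
    finally show ?thesis .
  qed
  have "(\<Sum>k. b k) \<le> 3 * A" unfolding suminf_eq_SUP by (rule SUP_least) (rule part)
  then show ?thesis unfolding a_def b_def A_def by simp
qed



theorem theorem5p5:
  fixes p :: real
  assumes "p > 0"
  shows "\<exists>C::real. C > 0 \<and> (\<forall>\<alpha>. in_l2 \<alpha> \<longrightarrow>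
           lp_norm p (\<lambda>k. ennreal (sigma \<alpha> k))
             \<le> ennreal C * lp_norm p (\<lambda>k. approx_number (R_op \<alpha>) (Suc k)))"
proof -
  define K where "K = 3 * (sqrt 5 powr p)"
  have K0: "0 < K" unfolding K_def by simp
  define C where "C = K powr (1/p)"
  have C0: "0 < C" unfolding C_def using K0 by simp
  have "lp_norm p (\<lambda>k. ennreal (sigma \<alpha> k))
             \<le> ennreal C * lp_norm p (\<lambda>k. approx_number (R_op \<alpha>) (Suc k))" for \<alpha>
  proof -
    define A where "A = (\<Sum>n. ennpowr (approx_number (R_op \<alpha>) (Suc n)) p)"
    have pt: "ennpowr (ennreal (sigma \<alpha> k)) p
        = ennreal (sqrt 5 powr p) * ennpowr (ennreal (sigma \<alpha> k / sqrt 5)) p" for k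
    proof -
      have "ennreal (sigma \<alpha> k) = ennreal (sqrt 5) * ennreal (sigma \<alpha> k / sqrt 5)"
        by (simp add: ennreal_mult[symmetric] sigma_def sum_nonneg)
      then show ?thesis using ennpowr_cmult[of "sqrt 5" p] assms by simp
    qed
    have "(\<Sum>k. ennpowr (ennreal (sigma \<alpha> k)) p)
        = ennreal (sqrt 5 powr p) * (\<Sum>k. ennpowr (ennreal (sigma \<alpha> k / sqrt 5)) p)"
      unfolding pt by simp
    also have "\<dots> \<le> ennreal (sqrt 5 powr p) * (3 * A)"
      unfolding A_def by (intro mult_left_mono main_sum[OF assms]) auto
    also have "\<dots> = ennreal K * A" unfolding K_def
      by (simp add: ennreal_mult mult.assoc mult.left_commute)
    finally have X: "(\<Sum>k. ennpowr (ennreal (sigma \<alpha> k)) p) \<le> ennreal K * A" .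
    have ip: "0 < 1/p" using assms by simp
    have "lp_norm p (\<lambda>k. ennreal (sigma \<alpha> k)) \<le> ennpowr (ennreal K * A) (1/p)"
      unfolding lp_norm_def by (rule ennpowr_mono[OF X ip])
    also have "\<dots> = ennreal C * ennpowr A (1/p)" unfolding C_def by (rule ennpowr_cmult[OF K0 ip])
    finally show ?thesis unfolding lp_norm_def A_def .
  qed
  then show ?thesis using C0 by blast
qed


end
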